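(* Let $n\ge1$, let $r$ be an integer with $(n+1)/2<r\le n$, and let $\alpha\in(0,1/2)$. Let $\theta\in\mathbb{R}^n$ and let $T_1,\dots,T_n$ be independent with $T_i\sim N(\theta_i,1)$; let $T_{(1)}\le\dots\le T_{(n)}$ be their order statistics. Let $\Phi$ be the standard normal cumulative distribution function and $t=\Phi^{-1}\{1-\alpha/(n-r+1)\}$. Let $n^+(\theta)=|\{i:\theta_i>0\}|$ and $n^-(\theta)=|\{i:\theta_i<0\}|$. Then $$\sup_{\theta\in\mathbb{R}^n:\ n^+(\theta)\ge r}\Pr_\theta\big(T_{(r)}<-t\big)\le\alpha\qquad\text{and}\qquad \sup_{\theta\in\mathbb{R}^n:\ n^-(\theta)\ge r}\Pr_\theta\big(T_{(n-r+1)}>t\big)\le\alpha.$$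
   Context: This is Type III (wrong sign) error control for the directional replicability test that rejects "$n^+<r$ and $n^-<r$" when $\min\{(n-r+1)p_{(r)},(n-r+1)q_{(r)}\}\le\alpha$, where $p_i=1-\Phi(T_i)$, $q_i=\Phi(T_i)$; the event $T_{(r)}\le -t$ is equivalent to $(n-r+1)q_{(r)}\le\alpha$ (declaring a negative replicated effect) and $T_{(n-r+1)}\ge t$ is equivalent to $(n-r+1)p_{(r)}\le\alpha$ (declaring a positive replicated effect). *)

theory Defs
  imports "HOL-Probability.Probability"
begin

definition Phi :: "real \<Rightarrow> real" where
  "Phi x = measure (density lborel std_normal_density) {..x}"

definition Phi_inv :: "real \<Rightarrow> real" where
  "Phi_inv p = (THE t. Phi t = p)"

definition T_law :: "nat \<Rightarrow> (nat \<Rightarrow> real) \<Rightarrow> (nat \<Rightarrow> real) measure" where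
  "T_law n \<theta> = PiM {..<n} (\<lambda>i. density lborel (normal_density (\<theta> i) 1))"

text \<open>r-th order statistic (1-based) of x 0, ..., x (n-1).\<close>
definition ord_stat :: "nat \<Rightarrow> nat \<Rightarrow> (nat \<Rightarrow> real) \<Rightarrow> real" where
  "ord_stat n r x = sort (map x [0..<n]) ! (r - 1)"

definition n_pos :: "nat \<Rightarrow> (nat \<Rightarrow> real) \<Rightarrow> nat" where
  "n_pos n \<theta> = card {i. i < n \<and> \<theta> i > 0}"

definition n_neg :: "nat \<Rightarrow> (nat \<Rightarrow> real) \<Rightarrow> nat" where
  "n_neg n \<theta> = card {i. i < n \<and> \<theta> i < 0}"

end

theory Submission imports Defs begin

lemma sorted_nth_ge:
  fixes xs :: "real list"
  assumes "sorted xs" "j < length xs" "length (filter (\<lambda>y. y < c) xs) \<le> j"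
  shows "c \<le> xs ! j"
proof (rule ccontr)
  assume "\<not> c \<le> xs ! j"
  hence "\<forall>i\<le>j. xs ! i < c" using assms(1,2) by (meson le_less_trans not_le sorted_nth_mono)
  hence "{..j} \<subseteq> {i. i < length xs \<and> xs ! i < c}" using assms(2) by auto
  hence "card {..j} \<le> card {i. i < length xs \<and> xs ! i < c}" by (intro card_mono) auto
  thus False using assms(3) by (simp add: length_filter_conv_card)
qed

lemma sorted_nth_le:
  fixes xs :: "real list"
  assumes "sorted xs" "j < length xs" "length (filter (\<lambda>y. c < y) xs) + j + 1 \<le> length xs"
  shows "xs ! j \<le> c"
proof (rule ccontr)
  assume "\<not> xs ! j \<le> c"
  hence "\<forall>i. j \<le> i \<and> i < length xs \<longrightarrow> c < xs ! i" using assms(1,2) by (meson less_le_trans not_le sorted_nth_mono)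
  hence "{j..<length xs} \<subseteq> {i. i < length xs \<and> c < xs ! i}" by auto
  hence "card {j..<length xs} \<le> card {i. i < length xs \<and> c < xs ! i}" by (intro card_mono) auto
  thus False using assms(2,3) by (simp add: length_filter_conv_card)
qed

lemma count_sort_map:
  "length (filter P (sort (map x [0..<n]))) = card {i. i < n \<and> P (x i)}"
  by (simp add: filter_sort length_filter_conv_card cong: conj_cong)

lemma ord_stat_ge:
  assumes "1 \<le> r" "r \<le> n" "card {i. i < n \<and> x i < c} \<le> r - 1"
  shows "c \<le> ord_stat n r x"
  unfolding ord_stat_def
  apply (rule sorted_nth_ge)
  using assms by (auto simp: count_sort_map)

lemma ord_stat_le:
  assumes "1 \<le> r" "r \<le> n" "card {i. i < n \<and> c < x i} + r \<le> n"
  shows "ord_stat n r x \<le> c"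
  unfolding ord_stat_def
  apply (rule sorted_nth_le)
  using assms by (auto simp: count_sort_map)

abbreviation "NN \<mu> \<equiv> density lborel (\<lambda>x. ennreal (normal_density \<mu> 1 x))"

lemma nd_shift: "normal_density \<theta> 1 (\<theta> + x) = normal_density 0 1 x"
  by (simp add: normal_density_def)

lemma nd_neg: "normal_density 0 1 (- x) = normal_density 0 1 x"
  by (simp add: normal_density_def)

lemma NN_left:
  assumes "0 \<le> \<theta>"
  shows "emeasure (NN \<theta>) {..<a} \<le> emeasure (NN 0) {..<a}"
proof -
  have "emeasure (NN \<theta>) {..<a} = (\<integral>\<^sup>+x. ennreal (normal_density \<theta> 1 x) * indicator {..<a} x \<partial>lborel)"
    by (simp add: emeasure_density)
  also have "\<dots> = (\<integral>\<^sup>+x. ennreal (normal_density \<theta> 1 (\<theta> + 1 * x)) * indicator {..<a} (\<theta> + 1 * x) \<partial>lborel)"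
    by (subst nn_integral_real_affine[where c=1 and t=\<theta>]) auto
  also have "\<dots> \<le> (\<integral>\<^sup>+x. ennreal (normal_density 0 1 x) * indicator {..<a} x \<partial>lborel)"
    by (rule nn_integral_mono) (use assms in \<open>auto simp: nd_shift indicator_def\<close>)
  also have "\<dots> = emeasure (NN 0) {..<a}"
    by (simp add: emeasure_density)
  finally show ?thesis .
qed

lemma NN_right:
  assumes "\<theta> \<le> 0"
  shows "emeasure (NN \<theta>) {a<..} \<le> emeasure (NN 0) {a<..}"
proof -
  have "emeasure (NN \<theta>) {a<..} = (\<integral>\<^sup>+x. ennreal (normal_density \<theta> 1 x) * indicator {a<..} x \<partial>lborel)"
    by (simp add: emeasure_density)
  also have "\<dots> = (\<integral>\<^sup>+x. ennreal (normal_density \<theta> 1 (\<theta> + 1 * x)) * indicator {a<..} (\<theta> + 1 * x) \<partial>lborel)"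
    by (subst nn_integral_real_affine[where c=1 and t=\<theta>]) auto
  also have "\<dots> \<le> (\<integral>\<^sup>+x. ennreal (normal_density 0 1 x) * indicator {a<..} x \<partial>lborel)"
    by (rule nn_integral_mono) (use assms in \<open>auto simp: nd_shift indicator_def\<close>)
  also have "\<dots> = emeasure (NN 0) {a<..}"
    by (simp add: emeasure_density)
  finally show ?thesis .
qed

lemma NN_symm: "emeasure (NN 0) {..< -a} = emeasure (NN 0) {a<..}"
proof -
  have "emeasure (NN 0) {..< -a} = (\<integral>\<^sup>+x. ennreal (normal_density 0 1 x) * indicator {..< -a} x \<partial>lborel)"
    by (simp add: emeasure_density)
  also have "\<dots> = ennreal \<bar>-1\<bar> * (\<integral>\<^sup>+x. ennreal (normal_density 0 1 (0 + -1 * x)) * indicator {..< -a} (0 + -1 * x) \<partial>lborel)"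
    by (rule nn_integral_real_affine) auto
  also have "\<dots> = (\<integral>\<^sup>+x. ennreal (normal_density 0 1 (- x)) * indicator {..< -a} (- x) \<partial>lborel)"
    by simp
  also have "\<dots> = (\<integral>\<^sup>+x. ennreal (normal_density 0 1 x) * indicator {a<..} x \<partial>lborel)"
    by (rule nn_integral_cong) (auto simp: nd_neg indicator_def)
  also have "\<dots> = emeasure (NN 0) {a<..}"
    by (simp add: emeasure_density)
  finally show ?thesis .
qed

lemma prob_NN: "prob_space (NN \<mu>)" using prob_space_normal_density[where \<mu>=\<mu> and \<sigma>=1] by simp

lemma real_distr_NN: "real_distribution (NN 0)"
  unfolding real_distribution_def real_distribution_axioms_def using prob_NN[of 0] by simp

lemma NN_singleton: "emeasure (NN 0) {x} = 0"
  by (simp add: emeasure_density)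

lemma NN_Ioc_pos:
  assumes "a < b" shows "0 < emeasure (NN 0) {a<..b}"
proof -
  have "emeasure (NN 0) {a<..b} = (\<integral>\<^sup>+x. ennreal (normal_density 0 1 x) * indicator {a<..b} x \<partial>lborel)"
    by (simp add: emeasure_density)
  moreover have "(\<integral>\<^sup>+x. ennreal (normal_density 0 1 x) * indicator {a<..b} x \<partial>lborel) \<noteq> 0"
  proof (subst nn_integral_0_iff)
    have "{x \<in> space lborel. ennreal (normal_density 0 1 x) * indicator {a<..b} x \<noteq> 0} = {a<..b}"
      using normal_density_pos[OF zero_less_one, of 0] by (auto simp: indicator_def) (metis less_irrefl)
    thus "emeasure lborel {x \<in> space lborel. ennreal (normal_density 0 1 x) * indicator {a<..b} x \<noteq> 0} \<noteq> 0"
      using assms by simp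
  qed auto
  ultimately show ?thesis by (simp add: zero_less_iff_neq_zero)
qed


lemma Phi_cdf: "Phi = cdf (NN 0)"
  by (auto simp: Phi_def cdf_def)

lemma Phi_cont: "isCont Phi x"
proof -
  interpret real_distribution "NN 0" by (rule real_distr_NN)
  have "measure (NN 0) {x} = 0" using NN_singleton by (simp add: measure_def)
  thus ?thesis unfolding Phi_cdf by (simp add: isCont_cdf)
qed

lemma Phi_strict: "a < b \<Longrightarrow> Phi a < Phi b"
proof -
  assume ab: "a < b"
  interpret real_distribution "NN 0" by (rule real_distr_NN)
  have "0 < measure (NN 0) {a<..b}"
    using NN_Ioc_pos[OF ab] emeasure_eq_measure[of "{a<..b}"] by simp
  thus ?thesis unfolding Phi_cdf using cdf_diff_eq[OF ab] by simp
qed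

lemma Phi_inv_eq:
  assumes "0 < p" "p < 1"
  shows "Phi (Phi_inv p) = p"
proof -
  interpret real_distribution "NN 0" by (rule real_distr_NN)
  have "eventually (\<lambda>x. Phi x < p) at_bot"
    using cdf_lim_at_bot assms(1) unfolding Phi_cdf by (simp add: order_tendstoD(2))
  then obtain a where a: "Phi a < p" by (metis eventually_at_bot_linorder order_refl)
  have "eventually (\<lambda>x. Phi x > p) at_top"
    using cdf_lim_at_top_prob assms(2) unfolding Phi_cdf by (simp add: order_tendstoD(1))
  then obtain b where b: "Phi b > p" by (metis eventually_at_top_linorder order_refl)
  have "a \<le> b"
  proof (rule ccontr)
    assume "\<not> a \<le> b" hence "b < a" by simp
    from Phi_strict[OF this] a b show False by simp
  qed
  then obtain x where x: "Phi x = p"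
    using IVT'[of Phi a p b] a b Phi_cont by (auto intro: continuous_at_imp_continuous_on)
  have "Phi_inv p = x" unfolding Phi_inv_def
  proof (rule the_equality)
    show "Phi x = p" by (rule x)
  next
    fix y assume y: "Phi y = p"
    show "y = x"
    proof (rule ccontr)
      assume "y \<noteq> x"
      hence "y < x \<or> x < y" by auto
      thus False using Phi_strict[of y x] Phi_strict[of x y] x y by auto
    qed
  qed
  thus ?thesis using x by simp
qed

lemma upper_tail:
  assumes "0 < q" "q < 1"
  shows "measure (NN 0) {Phi_inv (1 - q)<..} = q"
proof -
  interpret prob_space "NN 0" by (rule prob_NN)
  have "UNIV - {..Phi_inv (1 - q)} = {Phi_inv (1 - q)<..}" by auto
  hence "measure (NN 0) {Phi_inv (1 - q)<..} = 1 - measure (NN 0) {..Phi_inv (1 - q)}"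
    using prob_compl[of "{..Phi_inv (1 - q)}"] by simp
  also have "measure (NN 0) {..Phi_inv (1 - q)} = 1 - q"
    using Phi_inv_eq[of "1 - q"] assms by (simp add: Phi_def)
  finally show ?thesis by simp
qed

lemma comp_measure:
  assumes i: "i \<in> I" and P: "\<And>i. i \<in> I \<Longrightarrow> prob_space (M i)" and A: "A \<in> sets (M i)"
  shows "measure (PiM I M) {x \<in> space (PiM I M). x i \<in> A} = measure (M i) A"
    and "{x \<in> space (PiM I M). x i \<in> A} \<in> sets (PiM I M)"
proof -
  have eq: "(\<lambda>\<omega>. \<omega> i) -` A \<inter> space (PiM I M) = {x \<in> space (PiM I M). x i \<in> A}" by auto
  have "measure (M i) A = measure (distr (PiM I M) (M i) (\<lambda>\<omega>. \<omega> i)) A"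
    using distr_PiM_component[of I M i, OF P i] by simp
  also have "\<dots> = measure (PiM I M) {x \<in> space (PiM I M). x i \<in> A}"
    using measure_distr[OF measurable_component_singleton[OF i, where M=M] A] eq by simp
  finally show "measure (PiM I M) {x \<in> space (PiM I M). x i \<in> A} = measure (M i) A" by simp
  show "{x \<in> space (PiM I M). x i \<in> A} \<in> sets (PiM I M)"
    using measurable_sets[OF measurable_component_singleton[OF i, where M=M] A] eq by simp
qed

lemma NN_left_m:
  assumes "0 \<le> \<theta>" shows "measure (NN \<theta>) {..<a} \<le> measure (NN 0) {..<a}"
proof -
  interpret A: prob_space "NN \<theta>" by (rule prob_NN)
  interpret B: prob_space "NN 0" by (rule prob_NN)
  have "ennreal (measure (NN \<theta>) {..<a}) \<le> ennreal (measure (NN 0) {..<a})"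
    using NN_left[OF assms, of a] A.emeasure_eq_measure[of "{..<a}"]
      B.emeasure_eq_measure[of "{..<a}"] by simp
  thus ?thesis by (simp add: ennreal_le_iff)
qed

lemma NN_right_m:
  assumes "\<theta> \<le> 0" shows "measure (NN \<theta>) {a<..} \<le> measure (NN 0) {a<..}"
proof -
  interpret A: prob_space "NN \<theta>" by (rule prob_NN)
  interpret B: prob_space "NN 0" by (rule prob_NN)
  have "ennreal (measure (NN \<theta>) {a<..}) \<le> ennreal (measure (NN 0) {a<..})"
    using NN_right[OF assms, of a] A.emeasure_eq_measure[of "{a<..}"]
      B.emeasure_eq_measure[of "{a<..}"] by simp
  thus ?thesis by (simp add: ennreal_le_iff)
qed

lemma NN_symm_m: "measure (NN 0) {..< -a} = measure (NN 0) {a<..}"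
  using NN_symm[of a] by (simp add: measure_def)

theorem proposition2:
  fixes n r :: nat and \<alpha> t :: real
  assumes "n \<ge> 1"
    and "(real n + 1) / 2 < real r" and "r \<le> n"
    and "0 < \<alpha>" and "\<alpha> < 1/2"
    and "t = Phi_inv (1 - \<alpha> / real (n - r + 1))"
  shows "(\<forall>\<theta> :: nat \<Rightarrow> real. n_pos n \<theta> \<ge> r \<longrightarrow>
            measure (T_law n \<theta>) {x \<in> space (T_law n \<theta>). ord_stat n r x < - t} \<le> \<alpha>)
       \<and> (\<forall>\<theta> :: nat \<Rightarrow> real. n_neg n \<theta> \<ge> r \<longrightarrow>
            measure (T_law n \<theta>) {x \<in> space (T_law n \<theta>). ord_stat n (n - r + 1) x > t} \<le> \<alpha>)"
proof -
  define k where "k = n - r + 1"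
  have "real (n + 1) < real (2 * r)" using assms(2) by simp
  hence nr: "n + 1 < 2 * r" by (simp only: of_nat_less_iff)
  have k1: "1 \<le> k" and kr: "k \<le> r" and kn: "k \<le> n" and rk: "r - 1 = n - k"
    using nr assms(3) unfolding k_def by arith+
  have r1: "1 \<le> r" using kr k1 by simp
  define q where "q = \<alpha> / real k"
  have q0: "0 < q" and q1: "q < 1" unfolding q_def using assms(4,5) k1 by (auto simp: field_simps)
  have tq: "t = Phi_inv (1 - q)" using assms(6) unfolding q_def k_def by simp
  have tail: "measure (NN 0) {t<..} = q" using upper_tail[OF q0 q1] tq by simp
  have kq: "real k * q = \<alpha>" unfolding q_def using k1 by simp
  have probs: "\<And>i. i \<in> {..<n} \<Longrightarrow> prob_space (NN (\<theta> i))" for \<theta> :: "nat \<Rightarrow> real"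
    using prob_NN by blast
  show ?thesis
  proof (intro conjI allI impI)
    fix \<theta> :: "nat \<Rightarrow> real"
    assume h: "r \<le> n_pos n \<theta>"
    let ?M = "T_law n \<theta>"
    let ?P = "{i. i < n \<and> 0 < \<theta> i}"
    have "k \<le> card ?P" using h kr unfolding n_pos_def by simp
    then obtain S where S: "S \<subseteq> ?P" "card S = k"
      using obtain_subset_with_card_n by metis
    have finS: "finite S" using S(1) finite_subset[of S "{..<n}"] by auto
    let ?E = "\<lambda>i. {x \<in> space ?M. x i \<in> {..< -t}}"
    have sub: "{x \<in> space ?M. ord_stat n r x < - t} \<subseteq> (\<Union>i\<in>S. ?E i)"
    proof
      fix x assume x: "x \<in> {x \<in> space ?M. ord_stat n r x < - t}"
      show "x \<in> (\<Union>i\<in>S. ?E i)"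
      proof (rule ccontr)
        assume "x \<notin> (\<Union>i\<in>S. ?E i)"
        hence "\<forall>i\<in>S. - t \<le> x i" using x by auto
        hence "{i. i < n \<and> x i < - t} \<subseteq> {..<n} - S" by auto
        hence "card {i. i < n \<and> x i < - t} \<le> card ({..<n} - S)" by (intro card_mono) auto
        also have "\<dots> = n - k" using S finS by (subst card_Diff_subset) auto
        finally have "- t \<le> ord_stat n r x" using ord_stat_ge[OF r1 assms(3)] rk by simp
        thus False using x by simp
      qed
    qed
    have sets: "?E i \<in> sets ?M" if "i \<in> S" for i
      unfolding T_law_def using comp_measure(2)[of i "{..<n}" "\<lambda>j. NN (\<theta> j)" "{..< -t}"] prob_NN that S by auto
    have "measure ?M {x \<in> space ?M. ord_stat n r x < - t} \<le> measure ?M (\<Union>i\<in>S. ?E i)"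
    proof -
      interpret PM: prob_space ?M unfolding T_law_def by (intro prob_space_PiM probs)
      show ?thesis using sub sets finS by (intro PM.finite_measure_mono) auto
    qed
    also have "\<dots> \<le> (\<Sum>i\<in>S. measure ?M (?E i))"
      using sets finS by (intro measure_UNION_le) auto
    also have "\<dots> \<le> (\<Sum>i\<in>S. q)"
    proof (rule sum_mono)
      fix i assume i: "i \<in> S"
      have "measure ?M (?E i) = measure (NN (\<theta> i)) {..< -t}"
        unfolding T_law_def using comp_measure(1)[of i "{..<n}" "\<lambda>j. NN (\<theta> j)" "{..< -t}"] prob_NN i S by auto
      also have "\<dots> \<le> measure (NN 0) {..< -t}" using i S by (intro NN_left_m) auto
      also have "\<dots> = q" using NN_symm_m tail by simp
      finally show "measure ?M (?E i) \<le> q" .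
    qed
    also have "\<dots> = \<alpha>" using S kq by simp
    finally show "measure ?M {x \<in> space ?M. ord_stat n r x < - t} \<le> \<alpha>" .
  next
    fix \<theta> :: "nat \<Rightarrow> real"
    assume h: "r \<le> n_neg n \<theta>"
    let ?M = "T_law n \<theta>"
    let ?P = "{i. i < n \<and> \<theta> i < 0}"
    have "k \<le> card ?P" using h kr unfolding n_neg_def by simp
    then obtain S where S: "S \<subseteq> ?P" "card S = k"
      using obtain_subset_with_card_n by metis
    have finS: "finite S" using S(1) finite_subset[of S "{..<n}"] by auto
    let ?E = "\<lambda>i. {x \<in> space ?M. x i \<in> {t<..}}"
    have sub: "{x \<in> space ?M. t < ord_stat n k x} \<subseteq> (\<Union>i\<in>S. ?E i)"
    proof
      fix x assume x: "x \<in> {x \<in> space ?M. t < ord_stat n k x}"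
      show "x \<in> (\<Union>i\<in>S. ?E i)"
      proof (rule ccontr)
        assume "x \<notin> (\<Union>i\<in>S. ?E i)"
        hence "\<forall>i\<in>S. x i \<le> t" using x by auto
        hence "{i. i < n \<and> t < x i} \<subseteq> {..<n} - S" by auto
        hence "card {i. i < n \<and> t < x i} \<le> card ({..<n} - S)" by (intro card_mono) auto
        also have "\<dots> = n - k" using S finS by (subst card_Diff_subset) auto
        finally have "ord_stat n k x \<le> t" using ord_stat_le[OF k1 kn] kn by simp
        thus False using x by simp
      qed
    qed
    have sets: "?E i \<in> sets ?M" if "i \<in> S" for i
      unfolding T_law_def using comp_measure(2)[of i "{..<n}" "\<lambda>j. NN (\<theta> j)" "{t<..}"] prob_NN that S by auto
    have "measure ?M {x \<in> space ?M. t < ord_stat n k x} \<le> measure ?M (\<Union>i\<in>S. ?E i)"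
    proof -
      interpret PM: prob_space ?M unfolding T_law_def by (intro prob_space_PiM probs)
      show ?thesis using sub sets finS by (intro PM.finite_measure_mono) auto
    qed
    also have "\<dots> \<le> (\<Sum>i\<in>S. measure ?M (?E i))"
      using sets finS by (intro measure_UNION_le) auto
    also have "\<dots> \<le> (\<Sum>i\<in>S. q)"
    proof (rule sum_mono)
      fix i assume i: "i \<in> S"
      have "measure ?M (?E i) = measure (NN (\<theta> i)) {t<..}"
        unfolding T_law_def using comp_measure(1)[of i "{..<n}" "\<lambda>j. NN (\<theta> j)" "{t<..}"] prob_NN i S by auto
      also have "\<dots> \<le> measure (NN 0) {t<..}" using i S by (intro NN_right_m) auto
      also have "\<dots> = q" using tail by simp
      finally show "measure ?M (?E i) \<le> q" .
    qed
    also have "\<dots> = \<alpha>" using S kq by simp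
    finally show "measure ?M {x \<in> space ?M. t < ord_stat n (n - r + 1) x} \<le> \<alpha>"
      unfolding k_def .
  qed
qed

end
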